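(* Let $a,b\ge1$, $n=a+b+1$, $f=a+1$, and let $G$ be the $n\times n$ symmetric matrix with $G_{ii}=2$ for $i\neq f$, $G_{ff}=0$, $G_{i,i+1}=G_{i+1,i}=-1$ for $1\le i<n$, and all other entries $0$. With $m^S$ defined from $G$, $f$, $r',r''$ by $m^S_{ij}=r'G_{ij}$ for $i,j\le f$, $(i,j)\ne(f,f)$; $m^S_{ij}=r''G_{ij}$ for $i,j\ge f$, $(i,j)\neq(f,f)$; $m^S_{ij}=0$ if $i<f<j$ or $j<f<i$; $m^S_{ff}=1$: the matrix $m^S$ is positive definite with all diagonal entries $\le1$ if and only if $$0<r'\le\tfrac12,\qquad 0<r''\le\tfrac12,\qquad \tfrac{a}{a+1}r'+\tfrac{b}{b+1}r''<1.$$
   Context: This is the standard-chamber Gram matrix for the Lie superalgebra $A(a,b)$ rescaled by $r'$ on the bosonic part of type $A_a$ and by $r''$ on the bosonic part of type $A_b$, with fermionic simple root $\alpha_f$ of squared length $1$. *)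

theory Defs
  imports Complex_Main
begin

text \<open>Matrices of size n are represented as functions nat => nat => real,
  with indices ranging over {1..n}.\<close>

definition gramA :: "nat \<Rightarrow> nat \<Rightarrow> nat \<Rightarrow> nat \<Rightarrow> real" where
  "gramA a b i j =
     (let f = a + 1 in
      if i = j then (if i = f then 0 else 2)
      else if i + 1 = j \<or> j + 1 = i then -1
      else 0)"

definition mS :: "nat \<Rightarrow> nat \<Rightarrow> real \<Rightarrow> real \<Rightarrow> nat \<Rightarrow> nat \<Rightarrow> real" where
  "mS a b r' r'' i j =
     (let f = a + 1 in
      if i = f \<and> j = f then 1
      else if i \<le> f \<and> j \<le> f then r' * gramA a b i j
      else if f \<le> i \<and> f \<le> j then r'' * gramA a b i j
      else 0)"

definition pos_def :: "nat \<Rightarrow> (nat \<Rightarrow> nat \<Rightarrow> real) \<Rightarrow> bool" where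
  "pos_def n M \<longleftrightarrow>
     (\<forall>i\<in>{1..n}. \<forall>j\<in>{1..n}. M i j = M j i) \<and>
     (\<forall>x :: nat \<Rightarrow> real. (\<exists>i\<in>{1..n}. x i \<noteq> 0) \<longrightarrow>
        (\<Sum>i=1..n. \<Sum>j=1..n. x i * M i j * x j) > 0)"

end

theory Submission
  imports Defs
begin


fun chC :: "(nat \<Rightarrow> real) \<Rightarrow> nat \<Rightarrow> real \<Rightarrow> real" where
  "chC y 0 s = 0"
| "chC y (Suc k) s = chC y k (y (Suc k)) + 2 * (y (Suc k))^2 - 2 * y (Suc k) * s"

fun chG :: "(nat \<Rightarrow> real) \<Rightarrow> nat \<Rightarrow> nat \<Rightarrow> real" where
  "chG y m 0 = 0"
| "chG y m (Suc k) = chG y m k + 2 * (y (m + Suc k))^2 - 2 * y (m + k) * y (m + Suc k)"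

lemma l1: fixes s::real shows "real i / (real k + 1) * ((real k + 1) / (real k + 2) * s) = real i / (real (Suc k) + 1) * s"
proof -
  have a: "real k + 1 \<noteq> 0" by linarith
  show ?thesis using a by (simp add: add_ac)
qed
lemma l2: fixes s::real shows "(real k + 1 - real j) / (real k + 1) * ((real k + 1) / (real k + 2) * s) = (real (Suc k) + 1 - real (Suc j)) / (real (Suc k) + 1) * s"
proof -
  have a: "real k + 1 \<noteq> 0" by linarith
  show ?thesis using a by (simp add: add_ac)
qed

lemma sq_id:
  fixes t s :: real and k :: nat
  shows "2 * t^2 - 2 * t * s + (real k + 1) / (real k + 2) * s^2 - real k / (real k + 1) * t^2
    = ((real k + 2) * t - (real k + 1) * s)^2 / ((real k + 1) * (real k + 2))"
  by (simp add: field_simps power2_eq_square)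

lemma chC_step:
  "chC y (Suc k) s + real (Suc k) / (real (Suc k) + 1) * s^2
   = (chC y k (y (Suc k)) + real k / (real k + 1) * (y (Suc k))^2)
     + ((real k + 2) * y (Suc k) - (real k + 1) * s)^2 / ((real k + 1) * (real k + 2))"
  using sq_id[of "y (Suc k)" s k] by (simp add: add_ac)

lemma chC_nonneg: "chC y k s + real k / (real k + 1) * s^2 \<ge> 0"
proof (induction k arbitrary: s)
  case 0 then show ?case by simp
next
  case (Suc k)
  have "((real k + 2) * y (Suc k) - (real k + 1) * s)^2 / ((real k + 1) * (real k + 2)) \<ge> 0"
    by simp
  then show ?case using chC_step[of y k s] Suc.IH[of "y (Suc k)"] by linarith
qed

lemma chC_zero:
  "chC y k s + real k / (real k + 1) * s^2 = 0 \<longleftrightarrow> (\<forall>i\<in>{1..k}. y i = real i / (real k + 1) * s)"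
proof (induction k arbitrary: s)
  case 0 then show ?case by simp
next
  case (Suc k)
  define t where "t = y (Suc k)"
  define q where "q = ((real k + 2) * t - (real k + 1) * s)^2 / ((real k + 1) * (real k + 2))"
  have q0: "q \<ge> 0" unfolding q_def by simp
  have p0: "chC y k t + real k / (real k + 1) * t^2 \<ge> 0" by (rule chC_nonneg)
  have eq: "chC y (Suc k) s + real (Suc k) / (real (Suc k) + 1) * s^2
      = (chC y k t + real k / (real k + 1) * t^2) + q"
    unfolding q_def t_def by (rule chC_step)
  have qz: "q = 0 \<longleftrightarrow> t = (real k + 1) / (real k + 2) * s"
    proof -
    have d: "(real k + 1) * (real k + 2) > 0" by simp
    have "q = 0 \<longleftrightarrow> (real k + 2) * t - (real k + 1) * s = 0" unfolding q_def using d by simp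
    also have "\<dots> \<longleftrightarrow> t = (real k + 1) / (real k + 2) * s" by (auto simp: field_simps)
    finally show ?thesis .
  qed
  show ?case
  proof
    assume H: "chC y (Suc k) s + real (Suc k) / (real (Suc k) + 1) * s^2 = 0"
    hence A: "chC y k t + real k / (real k + 1) * t^2 = 0" and B: "q = 0"
      using eq q0 p0 by linarith+
    from B qz have tv: "t = (real k + 1) / (real k + 2) * s" by simp
    from A Suc.IH have IH: "\<forall>i\<in>{1..k}. y i = real i / (real k + 1) * t" by simp
    show "\<forall>i\<in>{1..Suc k}. y i = real i / (real (Suc k) + 1) * s"
    proof
      fix i assume i: "i \<in> {1..Suc k}"
      show "y i = real i / (real (Suc k) + 1) * s"
      proof (cases "i = Suc k")
        case True then show ?thesis using tv t_def by (simp add: add_ac)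
      next
        case False
        hence "i \<in> {1..k}" using i by auto
        hence "y i = real i / (real k + 1) * ((real k + 1) / (real k + 2) * s)" using IH tv by blast
        also have "\<dots> = real i / (real (Suc k) + 1) * s" by (rule l1)
        finally show ?thesis .
      qed
    qed
  next
    assume H: "\<forall>i\<in>{1..Suc k}. y i = real i / (real (Suc k) + 1) * s"
    hence tv: "t = (real k + 1) / (real k + 2) * s" unfolding t_def by (simp add: add_ac)
    have "\<forall>i\<in>{1..k}. y i = real i / (real k + 1) * t"
    proof
      fix i assume i: "i \<in> {1..k}"
      hence "y i = real i / (real (Suc k) + 1) * s" using H by auto
      then show "y i = real i / (real k + 1) * t" unfolding tv l1 .
    qed
    hence A: "chC y k t + real k / (real k + 1) * t^2 = 0" using Suc.IH by simp
    have "q = 0" using qz tv by simp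
    then show "chC y (Suc k) s + real (Suc k) / (real (Suc k) + 1) * s^2 = 0"
      using eq A by simp
  qed
qed

lemma chG_peel: "chG y m (Suc k) = 2 * (y (Suc m))^2 - 2 * y m * y (Suc m) + chG y (Suc m) k"
  by (induction k) auto

lemma chG_step:
  "chG y m (Suc k) + real (Suc k) / (real (Suc k) + 1) * (y m)^2
   = (chG y (Suc m) k + real k / (real k + 1) * (y (Suc m))^2)
     + ((real k + 2) * y (Suc m) - (real k + 1) * y m)^2 / ((real k + 1) * (real k + 2))"
  using sq_id[of "y (Suc m)" "y m" k] chG_peel[of y m k] by (simp add: algebra_simps)

lemma chG_nonneg: "chG y m k + real k / (real k + 1) * (y m)^2 \<ge> 0"
proof (induction k arbitrary: m)
  case 0 then show ?case by simp
next
  case (Suc k)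
  have "((real k + 2) * y (Suc m) - (real k + 1) * y m)^2 / ((real k + 1) * (real k + 2)) \<ge> 0"
    by simp
  then show ?case using chG_step[of y m k] Suc.IH[of "Suc m"] by linarith
qed

lemma chG_zero:
  "chG y m k + real k / (real k + 1) * (y m)^2 = 0 \<longleftrightarrow>
     (\<forall>i\<in>{1..k}. y (m + i) = (real k + 1 - real i) / (real k + 1) * y m)"
proof (induction k arbitrary: m)
  case 0 then show ?case by simp
next
  case (Suc k)
  define t where "t = y (Suc m)"
  define s where "s = y m"
  define q where "q = ((real k + 2) * t - (real k + 1) * s)^2 / ((real k + 1) * (real k + 2))"
  have q0: "q \<ge> 0" unfolding q_def by simp
  have p0: "chG y (Suc m) k + real k / (real k + 1) * t^2 \<ge> 0" unfolding t_def by (rule chG_nonneg)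
  have eq: "chG y m (Suc k) + real (Suc k) / (real (Suc k) + 1) * s^2
      = (chG y (Suc m) k + real k / (real k + 1) * t^2) + q"
    unfolding q_def t_def s_def by (rule chG_step)
  have qz: "q = 0 \<longleftrightarrow> t = (real k + 1) / (real k + 2) * s"
    proof -
    have d: "(real k + 1) * (real k + 2) > 0" by simp
    have "q = 0 \<longleftrightarrow> (real k + 2) * t - (real k + 1) * s = 0" unfolding q_def using d by simp
    also have "\<dots> \<longleftrightarrow> t = (real k + 1) / (real k + 2) * s" by (auto simp: field_simps)
    finally show ?thesis .
  qed
  show ?case
  proof
    assume H: "chG y m (Suc k) + real (Suc k) / (real (Suc k) + 1) * (y m)^2 = 0"
    hence H': "chG y m (Suc k) + real (Suc k) / (real (Suc k) + 1) * s^2 = 0" by (simp add: s_def)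
    hence A: "chG y (Suc m) k + real k / (real k + 1) * t^2 = 0" and B: "q = 0"
      using eq q0 p0 by linarith+
    from B qz have tv: "t = (real k + 1) / (real k + 2) * s" by simp
    from A Suc.IH have IH: "\<forall>i\<in>{1..k}. y (Suc m + i) = (real k + 1 - real i) / (real k + 1) * t"
      unfolding t_def by simp
    show "\<forall>i\<in>{1..Suc k}. y (m + i) = (real (Suc k) + 1 - real i) / (real (Suc k) + 1) * y m"
    proof
      fix i assume i: "i \<in> {1..Suc k}"
      show "y (m + i) = (real (Suc k) + 1 - real i) / (real (Suc k) + 1) * y m"
      proof (cases "i = 1")
        case True then show ?thesis using tv t_def s_def by (simp add: field_simps)
      next
        case False
        then obtain j where j: "i = Suc j" "j \<in> {1..k}" using i by (cases i) auto
        hence "y (m + i) = (real k + 1 - real j) / (real k + 1) * ((real k + 1) / (real k + 2) * s)" using IH tv j by simp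
        also have "\<dots> = (real (Suc k) + 1 - real (Suc j)) / (real (Suc k) + 1) * s" by (rule l2)
        finally show ?thesis using j s_def by simp
      qed
    qed
  next
    assume H: "\<forall>i\<in>{1..Suc k}. y (m + i) = (real (Suc k) + 1 - real i) / (real (Suc k) + 1) * y m"
    have one: "(1::nat) \<in> {1..Suc k}" by simp
    from bspec[OF H one] have "y (m + 1) = (real (Suc k) + 1 - real (1::nat)) / (real (Suc k) + 1) * y m" .
    hence tv: "t = (real k + 1) / (real k + 2) * s" unfolding t_def s_def by (simp add: add_ac)
    have "\<forall>j\<in>{1..k}. y (Suc m + j) = (real k + 1 - real j) / (real k + 1) * t"
    proof
      fix j assume j: "j \<in> {1..k}"
      hence sj: "Suc j \<in> {1..Suc k}" by simp
      from bspec[OF H sj] have "y (m + Suc j) = (real (Suc k) + 1 - real (Suc j)) / (real (Suc k) + 1) * y m" .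
      then show "y (Suc m + j) = (real k + 1 - real j) / (real k + 1) * t"
        unfolding tv l2 s_def by simp
    qed
    hence A: "chG y (Suc m) k + real k / (real k + 1) * t^2 = 0" using Suc.IH unfolding t_def by simp
    have "q = 0" using qz tv by simp
    then show "chG y m (Suc k) + real (Suc k) / (real (Suc k) + 1) * (y m)^2 = 0"
      using eq A s_def by simp
  qed
qed



definition Sq :: "(nat \<Rightarrow> nat \<Rightarrow> real) \<Rightarrow> (nat \<Rightarrow> real) \<Rightarrow> nat \<Rightarrow> real" where
  "Sq M x k = (\<Sum>i=1..k. \<Sum>j=1..k. x i * M i j * x j)"

lemma Sq_step:
  assumes tri: "\<And>i j. i + 1 < j \<or> j + 1 < i \<Longrightarrow> M i j = 0"
  shows "Sq M x (Suc (Suc k)) = Sq M x (Suc k) + x (Suc k) * M (Suc k) (Suc (Suc k)) * x (Suc (Suc k))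
     + x (Suc (Suc k)) * M (Suc (Suc k)) (Suc k) * x (Suc k)
     + x (Suc (Suc k)) * M (Suc (Suc k)) (Suc (Suc k)) * x (Suc (Suc k))"
proof -
  define g where "g i j = x i * M i j * x j" for i j
  define K where "K = Suc (Suc k)"
  have c1: "(\<Sum>i=1..k. g i K) = 0"
    by (rule sum.neutral) (auto simp: g_def K_def tri)
  have c2: "(\<Sum>j=1..k. g K j) = 0"
    by (rule sum.neutral) (auto simp: g_def K_def tri)
  have "Sq M x K = (\<Sum>i=1..K. (\<Sum>j=1..Suc k. g i j) + g i K)"
    unfolding Sq_def g_def K_def by (simp add: sum.cl_ivl_Suc)
  also have "\<dots> = (\<Sum>i=1..K. \<Sum>j=1..Suc k. g i j) + (\<Sum>i=1..K. g i K)"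
    by (simp add: sum.distrib)
  also have "(\<Sum>i=1..K. \<Sum>j=1..Suc k. g i j) = Sq M x (Suc k) + (\<Sum>j=1..Suc k. g K j)"
    unfolding Sq_def g_def K_def by (simp add: sum.cl_ivl_Suc)
  also have "(\<Sum>j=1..Suc k. g K j) = g K (Suc k)"
    using c2 by (simp add: sum.cl_ivl_Suc)
  also have "(\<Sum>i=1..K. g i K) = g (Suc k) K + g K K"
    using c1 unfolding K_def by (simp add: sum.cl_ivl_Suc)
  finally show ?thesis unfolding g_def K_def by simp
qed

lemma Sq_one: "Sq M x (Suc 0) = x 1 * M 1 1 * x 1"
  unfolding Sq_def by simp

lemma gramA_tri: "i + 1 < j \<or> j + 1 < i \<Longrightarrow> gramA a b i j = 0"
  unfolding gramA_def Let_def by auto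

lemma mS_tri: "i + 1 < j \<or> j + 1 < i \<Longrightarrow> mS a b r' r'' i j = 0"
  unfolding mS_def Let_def using gramA_tri[of i j a b] by auto

lemma mS_sym: "mS a b r' r'' i j = mS a b r' r'' j i"
  unfolding mS_def gramA_def Let_def by auto

lemma mS_diagL: "1 \<le> i \<Longrightarrow> i \<le> a \<Longrightarrow> mS a b r' r'' i i = 2 * r'"
  unfolding mS_def gramA_def Let_def by auto
lemma mS_diagF: "mS a b r' r'' (a+1) (a+1) = 1"
  unfolding mS_def gramA_def Let_def by auto
lemma mS_diagR: "a + 1 < i \<Longrightarrow> mS a b r' r'' i i = 2 * r''"
  unfolding mS_def gramA_def Let_def by auto
lemma mS_offL: "i + 1 \<le> a + 1 \<Longrightarrow> mS a b r' r'' i (Suc i) = - r'"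
  unfolding mS_def gramA_def Let_def by auto
lemma mS_offL': "i + 1 \<le> a + 1 \<Longrightarrow> mS a b r' r'' (Suc i) i = - r'"
  unfolding mS_def gramA_def Let_def by auto
lemma mS_offR: "a + 1 \<le> i \<Longrightarrow> mS a b r' r'' i (Suc i) = - r''"
  unfolding mS_def gramA_def Let_def by auto
lemma mS_offR': "a + 1 \<le> i \<Longrightarrow> mS a b r' r'' (Suc i) i = - r''"
  unfolding mS_def gramA_def Let_def by auto


lemma SL:
  assumes "1 \<le> k" "k \<le> a"
  shows "Sq (mS a b r' r'') x k = r' * chC x k 0"
  using assms
proof (induction k)
  case 0 then show ?case by simp
next
  case (Suc k)
  show ?case
  proof (cases k)
    case 0
    then show ?thesis using Suc.prems by (simp add: Sq_one mS_diagL power2_eq_square)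
  next
    case (Suc k')
    have IH: "Sq (mS a b r' r'') x (Suc k') = r' * chC x (Suc k') 0" using Suc.IH Suc.prems \<open>k = Suc k'\<close> by simp
    have st: "Sq (mS a b r' r'') x (Suc (Suc k')) = Sq (mS a b r' r'') x (Suc k')
      + x (Suc k') * mS a b r' r'' (Suc k') (Suc (Suc k')) * x (Suc (Suc k'))
      + x (Suc (Suc k')) * mS a b r' r'' (Suc (Suc k')) (Suc k') * x (Suc k')
      + x (Suc (Suc k')) * mS a b r' r'' (Suc (Suc k')) (Suc (Suc k')) * x (Suc (Suc k'))"
      by (rule Sq_step) (rule mS_tri)
    have "mS a b r' r'' (Suc k') (Suc (Suc k')) = - r'" using Suc.prems \<open>k = Suc k'\<close> by (intro mS_offL) simp
    moreover have "mS a b r' r'' (Suc (Suc k')) (Suc k') = - r'" using Suc.prems \<open>k = Suc k'\<close> by (intro mS_offL') simp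
    moreover have "mS a b r' r'' (Suc (Suc k')) (Suc (Suc k')) = 2 * r'" using Suc.prems \<open>k = Suc k'\<close> by (intro mS_diagL) simp_all
    ultimately show ?thesis using st IH \<open>k = Suc k'\<close> by (simp add: algebra_simps power2_eq_square)
  qed
qed

lemma SF:
  assumes "1 \<le> a"
  shows "Sq (mS a b r' r'') x (a + 1) = r' * chC x a (x (a + 1)) + (x (a + 1))^2"
proof -
  obtain a' where a: "a = Suc a'" using assms by (cases a) auto
  have IH: "Sq (mS a b r' r'') x (Suc a') = r' * chC x (Suc a') 0" using SL[of "Suc a'" a b r' r'' x] a by simp
  have st: "Sq (mS a b r' r'') x (Suc (Suc a')) = Sq (mS a b r' r'') x (Suc a')
      + x (Suc a') * mS a b r' r'' (Suc a') (Suc (Suc a')) * x (Suc (Suc a'))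
      + x (Suc (Suc a')) * mS a b r' r'' (Suc (Suc a')) (Suc a') * x (Suc a')
      + x (Suc (Suc a')) * mS a b r' r'' (Suc (Suc a')) (Suc (Suc a')) * x (Suc (Suc a'))"
    by (rule Sq_step) (rule mS_tri)
  have "mS a b r' r'' (Suc a') (Suc (Suc a')) = - r'" using a by (intro mS_offL) simp
  moreover have "mS a b r' r'' (Suc (Suc a')) (Suc a') = - r'" using a by (intro mS_offL') simp
  moreover have "mS a b r' r'' (Suc (Suc a')) (Suc (Suc a')) = 1" using mS_diagF[of a b r' r''] a by simp
  ultimately show ?thesis using st IH a by (simp add: algebra_simps power2_eq_square)
qed

lemma SR:
  assumes "1 \<le> a"
  shows "Sq (mS a b r' r'') x (a + 1 + j) = r' * chC x a (x (a + 1)) + (x (a + 1))^2 + r'' * chG x (a + 1) j"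
proof (induction j)
  case 0 then show ?case using SF[OF assms] by simp
next
  case (Suc j)
  have st: "Sq (mS a b r' r'') x (Suc (Suc (a + j))) = Sq (mS a b r' r'') x (Suc (a + j))
      + x (Suc (a + j)) * mS a b r' r'' (Suc (a + j)) (Suc (Suc (a + j))) * x (Suc (Suc (a + j)))
      + x (Suc (Suc (a + j))) * mS a b r' r'' (Suc (Suc (a + j))) (Suc (a + j)) * x (Suc (a + j))
      + x (Suc (Suc (a + j))) * mS a b r' r'' (Suc (Suc (a + j))) (Suc (Suc (a + j))) * x (Suc (Suc (a + j)))"
    by (rule Sq_step) (rule mS_tri)
  have "mS a b r' r'' (Suc (a + j)) (Suc (Suc (a + j))) = - r''" by (intro mS_offR) simp
  moreover have "mS a b r' r'' (Suc (Suc (a + j))) (Suc (a + j)) = - r''" by (intro mS_offR') simp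
  moreover have "mS a b r' r'' (Suc (Suc (a + j))) (Suc (Suc (a + j))) = 2 * r''" by (intro mS_diagR) simp
  ultimately show ?case using st Suc.IH by (simp add: algebra_simps power2_eq_square)
qed

lemma Qform:
  assumes "1 \<le> a"
  shows "(\<Sum>i=1..a + b + 1. \<Sum>j=1..a + b + 1. x i * mS a b r' r'' i j * x j)
     = r' * chC x a (x (a + 1)) + (x (a + 1))^2 + r'' * chG x (a + 1) b"
proof -
  have e: "a + b + 1 = a + 1 + b" by simp
  show ?thesis unfolding e using SR[OF assms, of b r' r'' x] unfolding Sq_def .
qed

lemma unit_form:
  fixes p n :: nat
  assumes "p \<in> {1..n}"
  shows "(\<Sum>i=1..n. \<Sum>j=1..n. (if i = p then 1 else 0) * M i j * (if j = p then (1::real) else 0)) = M p p"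
proof -
  have e: "(\<Sum>j=1..n. (if j = p then c else 0)) = c" for c :: real
    using sum.delta[of "{1..n}" p "\<lambda>_. c"] assms by simp
  have "(\<Sum>i=1..n. \<Sum>j=1..n. (if i = p then 1 else 0) * M i j * (if j = p then (1::real) else 0))
     = (\<Sum>i=1..n. if i = p then M p p else 0)"
    by (rule sum.cong) (auto simp: if_distrib e cong: if_cong)
  also have "\<dots> = M p p" using e .
  finally show ?thesis .
qed

theorem mainTheorem8:
  fixes a b :: nat and r' r'' :: real
  assumes "a \<ge> 1" and "b \<ge> 1"
  shows "(pos_def (a + b + 1) (mS a b r' r'') \<and>
          (\<forall>i\<in>{1..a + b + 1}. mS a b r' r'' i i \<le> 1))
     \<longleftrightarrow> (0 < r' \<and> r' \<le> 1/2 \<and> 0 < r'' \<and> r'' \<le> 1/2 \<and>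
          real a / real (a + 1) * r' + real b / real (b + 1) * r'' < 1)"
proof
  assume H: "pos_def (a + b + 1) (mS a b r' r'') \<and> (\<forall>i\<in>{1..a + b + 1}. mS a b r' r'' i i \<le> 1)"
  have pd: "\<And>x. (\<exists>i\<in>{1..a+b+1}. x i \<noteq> 0) \<Longrightarrow>
      (\<Sum>i=1..a + b + 1. \<Sum>j=1..a + b + 1. x i * mS a b r' r'' i j * x j) > 0"
    using H unfolding pos_def_def by blast
  have d1: "mS a b r' r'' 1 1 = 2 * r'" using assms by (intro mS_diagL) simp_all
  have dn: "mS a b r' r'' (a+b+1) (a+b+1) = 2 * r''" using assms by (intro mS_diagR) simp
  have "mS a b r' r'' 1 1 \<le> 1" using H by auto
  hence c1: "r' \<le> 1/2" using d1 by simp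
  have "mS a b r' r'' (a+b+1) (a+b+1) \<le> 1" using H by auto
  hence c2: "r'' \<le> 1/2" using dn by simp
  have m1: "(1::nat) \<in> {1..a+b+1}" by simp
  have "(\<Sum>i=1..a + b + 1. \<Sum>j=1..a + b + 1. (if i = 1 then 1 else 0) * mS a b r' r'' i j * (if j = 1 then (1::real) else 0)) > 0"
    using pd[of "\<lambda>i. if i = 1 then 1 else 0"] m1 by auto
  hence c3: "r' > 0" using unit_form[OF m1, of "mS a b r' r''"] d1 by simp
  have mn: "a+b+1 \<in> {1..a+b+1}" by simp
  have "(\<Sum>i=1..a + b + 1. \<Sum>j=1..a + b + 1. (if i = a+b+1 then 1 else 0) * mS a b r' r'' i j * (if j = a+b+1 then (1::real) else 0)) > 0"
    using pd[of "\<lambda>i. if i = a+b+1 then 1 else 0"] mn by auto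
  hence c4: "r'' > 0" using unit_form[OF mn, of "mS a b r' r''"] dn by simp
  define x where "x i = (if i \<le> a + 1 then real i / (real a + 1) else (real (a + b + 2) - real i) / (real b + 1))" for i
  have xf: "x (a + 1) = 1" unfolding x_def by simp
  have "chC x a (x (a+1)) + real a / (real a + 1) * (x (a+1))^2 = 0"
    unfolding chC_zero xf by (auto simp: x_def)
  hence L: "chC x a (x (a+1)) = - (real a / (real a + 1))" using xf by simp
  have "chG x (a+1) b + real b / (real b + 1) * (x (a+1))^2 = 0"
    unfolding chG_zero by (simp only: xf) (auto simp: x_def)
  hence R: "chG x (a+1) b = - (real b / (real b + 1))" using xf by simp
  have "(\<Sum>i=1..a + b + 1. \<Sum>j=1..a + b + 1. x i * mS a b r' r'' i j * x j) > 0"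
    using pd[of x] xf by (intro pd) (rule bexI[of _ "a+1"], simp_all)
  hence "r' * (- (real a / (real a + 1))) + 1 + r'' * (- (real b / (real b + 1))) > 0"
    using Qform[OF assms(1), where b=b and x=x and r'=r' and r''=r''] L R xf by simp
  hence c5: "real a / real (a + 1) * r' + real b / real (b + 1) * r'' < 1" by (simp add: algebra_simps)
  show "0 < r' \<and> r' \<le> 1/2 \<and> 0 < r'' \<and> r'' \<le> 1/2 \<and>
          real a / real (a + 1) * r' + real b / real (b + 1) * r'' < 1"
    using c1 c2 c3 c4 c5 by simp
next
  assume H: "0 < r' \<and> r' \<le> 1/2 \<and> 0 < r'' \<and> r'' \<le> 1/2 \<and>
          real a / real (a + 1) * r' + real b / real (b + 1) * r'' < 1"
  have diag: "\<forall>i\<in>{1..a + b + 1}. mS a b r' r'' i i \<le> 1"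
  proof
    fix i assume i: "i \<in> {1..a+b+1}"
    consider "i \<le> a" | "i = a + 1" | "a + 1 < i" by linarith
    then show "mS a b r' r'' i i \<le> 1"
    proof cases
      case 1 then show ?thesis using i H mS_diagL[of i a b r' r''] by simp
    next
      case 2 then show ?thesis using mS_diagF[of a b r' r''] by simp
    next
      case 3 then show ?thesis using H mS_diagR[of a i b r' r''] by simp
    qed
  qed
  have pos: "(\<Sum>i=1..a + b + 1. \<Sum>j=1..a + b + 1. x i * mS a b r' r'' i j * x j) > 0"
    if nz: "\<exists>i\<in>{1..a+b+1}. x i \<noteq> 0" for x
  proof -
    define s where "s = x (a + 1)"
    define P where "P = chC x a s + real a / (real a + 1) * s^2"
    define R where "R = chG x (a+1) b + real b / (real b + 1) * s^2"
    define c where "c = 1 - real a / (real a + 1) * r' - real b / (real b + 1) * r''"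
    have P0: "P \<ge> 0" unfolding P_def by (rule chC_nonneg)
    have R0: "R \<ge> 0" unfolding R_def s_def by (rule chG_nonneg)
    have c0: "c > 0" using H unfolding c_def by (simp add: add_ac)
    have Q: "(\<Sum>i=1..a + b + 1. \<Sum>j=1..a + b + 1. x i * mS a b r' r'' i j * x j)
        = r' * P + r'' * R + c * s^2"
      using Qform[OF assms(1), where b=b and x=x and r'=r' and r''=r''] unfolding P_def R_def c_def s_def
      by (simp add: algebra_simps)
    have t1: "r' * P \<ge> 0" using H P0 by simp
    have t2: "r'' * R \<ge> 0" using H R0 by simp
    have t3: "c * s^2 \<ge> 0" using c0 by simp
    show ?thesis
    proof (rule ccontr)
      assume "\<not> ?thesis"
      hence z: "r' * P + r'' * R + c * s^2 = 0" using Q t1 t2 t3 by linarith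
      hence "r' * P = 0" "r'' * R = 0" "c * s^2 = 0" using t1 t2 t3 by linarith+
      hence Pz: "P = 0" and Rz: "R = 0" and sz: "s = 0" using H c0 by simp_all
      have L0: "\<forall>i\<in>{1..a}. x i = 0" using Pz unfolding P_def chC_zero sz by simp
      have R0': "\<forall>i\<in>{1..b}. x (a + 1 + i) = 0" using Rz unfolding R_def s_def chG_zero using sz s_def by simp
      obtain i where i: "i \<in> {1..a+b+1}" "x i \<noteq> 0" using nz by blast
      consider "i \<le> a" | "i = a + 1" | "a + 1 < i" by linarith
      then show False
      proof cases
        case 1 then show ?thesis using i L0 by auto
      next
        case 2 then show ?thesis using i sz s_def by simp
      next
        case 3
        then obtain j where j: "i = a + 1 + j" "j \<in> {1..b}" using i by (intro that[of "i - (a+1)"]) auto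
        then show ?thesis using i R0' by auto
      qed
    qed
  qed
  have sym: "\<forall>i\<in>{1..a+b+1}. \<forall>j\<in>{1..a+b+1}. mS a b r' r'' i j = mS a b r' r'' j i"
    using mS_sym by blast
  show "pos_def (a + b + 1) (mS a b r' r'') \<and> (\<forall>i\<in>{1..a + b + 1}. mS a b r' r'' i i \<le> 1)"
    unfolding pos_def_def using sym pos diag by blast
qed

end
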